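(* Let $\kappa_r\ge0$ be an integer with $\kappa_c>\kappa_r$, let $\tilde r:\mathcal Z_{N_{i_0}^{\kappa_r}}\to[0,1]$ and $\gamma\in(0,1)$. Define the cost of the original chain $C(z)=\sum_{t\ge0}\gamma^t\,\mathbb E[\tilde r(z_{N_{i_0}^{\kappa_r}}(t))\mid z(0)=z]$ for $z\in\mathcal Z$, and the cost of the sub-chain $\tilde C(x)=\sum_{t\ge0}\gamma^t\,\mathbb E[\tilde r(x_{N_{i_0}^{\kappa_r}}(t))\mid x(0)=x]$ for $x\in\mathcal Z_N$, where $(x(t))$ is the Markov chain on $\mathcal Z_N$ with kernel $\overline{\mathbb P}$. Then $$\sup_{z\in\mathcal Z}\left|\tilde C(z_N)-C(z)\right|\le\frac{\gamma^{\kappa_c-\kappa_r+1}}{1-\gamma}.$$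
   Context: Localized Markov chain: agents $\mathcal N=\{1,\dots,n\}$ on an undirected graph with graph distance $\mathrm{dist}$; $N_i^\kappa=\{j:\mathrm{dist}(i,j)\le\kappa\}$, $\mathcal N_i=N_i^1$. Agent $j$ has a finite local state space $\mathcal Z_j$; $\mathcal Z=\prod_j\mathcal Z_j$, and $z_I,\mathcal Z_I$ denote joint states/spaces of $I\subseteq\mathcal N$, with $-I=\mathcal N\setminus I$. The transition kernel is $\mathbb P(z'\mid z)=\prod_j\mathbb P_j(z_j'\mid z_{\mathcal N_j})$, and it is assumed aperiodic and irreducible, with (full-support) stationary distribution $\overline\pi$. Fix an agent $i_0$ and an integer $\kappa_c\ge1$, and let $N=N_{i_0}^{\kappa_c}$, $\overline\pi_N$ the marginal of $\overline\pi$ on $\mathcal Z_N$, and $\mathbb P_N(x'\mid z)=\sum_{z'_{-N}}\mathbb P(x',z'_{-N}\mid z)$ for $x'\in\mathcal Z_N$, $z\in\mathcal Z$. The sub-chain kernel on $\mathcal Z_N$ is $$\overline{\mathbb P}(x'\mid x)=\sum_{z_{-N}\in\mathcal Z_{-N}}\frac{\overline\pi(x,z_{-N})}{\overline\pi_N(x)}\,\mathbb P_N\big(x'\mid(x,z_{-N})\big),\qquad x,x'\in\mathcal Z_N.$$ *)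

theory Defs
  imports "HOL-Analysis.Analysis"
begin

definition nbhd :: "('a \<Rightarrow> 'a \<Rightarrow> bool) \<Rightarrow> nat \<Rightarrow> 'a \<Rightarrow> 'a set" where
  "nbhd E k i = {j. \<exists>m\<le>k. (i, j) \<in> {(x, y). E x y} ^^ m}"

definition merge :: "'a set \<Rightarrow> ('a \<Rightarrow> 's) \<Rightarrow> ('a \<Rightarrow> 's) \<Rightarrow> 'a \<Rightarrow> 's" where
  "merge I x w = (\<lambda>j. if j \<in> I then x j else w j)"

text \<open>n-step transition probabilities of a kernel K on a finite state set S,
  with K x y = P(y | x).\<close>
fun kpow :: "'b set \<Rightarrow> ('b \<Rightarrow> 'b \<Rightarrow> real) \<Rightarrow> nat \<Rightarrow> 'b \<Rightarrow> 'b \<Rightarrow> real" where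
  "kpow S K 0 x y = (if x = y then 1 else 0)"
| "kpow S K (Suc n) x y = (\<Sum>u\<in>S. kpow S K n x u * K u y)"

definition irreducible_on :: "'b set \<Rightarrow> ('b \<Rightarrow> 'b \<Rightarrow> real) \<Rightarrow> bool" where
  "irreducible_on S K = (\<forall>x\<in>S. \<forall>y\<in>S. \<exists>n. kpow S K n x y > 0)"

definition aperiodic_on :: "'b set \<Rightarrow> ('b \<Rightarrow> 'b \<Rightarrow> real) \<Rightarrow> bool" where
  "aperiodic_on S K = (\<forall>x\<in>S. Gcd {n. 0 < n \<and> kpow S K n x x > 0} = (1::nat))"

definition stationary_on :: "'b set \<Rightarrow> ('b \<Rightarrow> 'b \<Rightarrow> real) \<Rightarrow> ('b \<Rightarrow> real) \<Rightarrow> bool" where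
  "stationary_on S K p = ((\<forall>x\<in>S. p x \<ge> 0) \<and> sum p S = 1 \<and>
      (\<forall>y\<in>S. (\<Sum>x\<in>S. p x * K x y) = p y))"

definition joint_kernel :: "('a::finite \<Rightarrow> 'a \<Rightarrow> bool) \<Rightarrow> ('a \<Rightarrow> ('a \<Rightarrow> 's) \<Rightarrow> 's \<Rightarrow> real)
      \<Rightarrow> ('a \<Rightarrow> 's) \<Rightarrow> ('a \<Rightarrow> 's) \<Rightarrow> real" where
  "joint_kernel E Pl z z' = (\<Prod>j\<in>UNIV. Pl j (restrict z (nbhd E 1 j)) (z' j))"

definition marg :: "'a set \<Rightarrow> ('a \<Rightarrow> 's set) \<Rightarrow> (('a \<Rightarrow> 's) \<Rightarrow> real) \<Rightarrow> ('a \<Rightarrow> 's) \<Rightarrow> real" where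
  "marg N Zs p x = (\<Sum>w\<in>Pi\<^sub>E (- N) Zs. p (merge N x w))"

definition kernN :: "'a set \<Rightarrow> ('a \<Rightarrow> 's set) \<Rightarrow> (('a \<Rightarrow> 's) \<Rightarrow> ('a \<Rightarrow> 's) \<Rightarrow> real)
      \<Rightarrow> ('a \<Rightarrow> 's) \<Rightarrow> ('a \<Rightarrow> 's) \<Rightarrow> real" where
  "kernN N Zs K z x' = (\<Sum>w'\<in>Pi\<^sub>E (- N) Zs. K z (merge N x' w'))"

definition sub_kernel :: "'a set \<Rightarrow> ('a \<Rightarrow> 's set) \<Rightarrow> (('a \<Rightarrow> 's) \<Rightarrow> real)
      \<Rightarrow> (('a \<Rightarrow> 's) \<Rightarrow> ('a \<Rightarrow> 's) \<Rightarrow> real) \<Rightarrow> ('a \<Rightarrow> 's) \<Rightarrow> ('a \<Rightarrow> 's) \<Rightarrow> real" where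
  "sub_kernel N Zs p K x x' =
     (\<Sum>w\<in>Pi\<^sub>E (- N) Zs. p (merge N x w) / marg N Zs p x * kernN N Zs K (merge N x w) x')"

definition disc_cost :: "'b set \<Rightarrow> ('b \<Rightarrow> 'b \<Rightarrow> real) \<Rightarrow> ('b \<Rightarrow> real) \<Rightarrow> real \<Rightarrow> 'b \<Rightarrow> real" where
  "disc_cost S K f \<gamma> x = (\<Sum>t. \<gamma> ^ t * (\<Sum>y\<in>S. kpow S K t x y * f y))"

end

theory Submission
  imports Defs
begin


lemma merge_in:
  assumes "a \<in> Pi\<^sub>E A Zs" "b \<in> Pi\<^sub>E (- A) Zs"
  shows "Defs.merge A a b \<in> Pi\<^sub>E UNIV Zs"
  using assms unfolding Defs.merge_def by (auto simp: PiE_iff)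

lemma restrict_merge1:
  assumes "a \<in> Pi\<^sub>E A Zs"
  shows "restrict (Defs.merge A a b) A = a"
  using assms unfolding Defs.merge_def by (auto simp: PiE_iff extensional_def)

lemma restrict_merge2:
  assumes "b \<in> Pi\<^sub>E (- A) Zs"
  shows "restrict (Defs.merge A a b) (- A) = b"
  using assms unfolding Defs.merge_def by (auto simp: PiE_iff extensional_def)

lemma merge_restrict: "Defs.merge A (restrict y A) (restrict y (- A)) = y"
  unfolding Defs.merge_def by auto

lemma sum_merge:
  fixes A :: "'a::finite set"
  assumes fin: "\<forall>j. finite (Zs j)"
  shows "(\<Sum>y\<in>Pi\<^sub>E UNIV Zs. h y) = (\<Sum>a\<in>Pi\<^sub>E A Zs. \<Sum>b\<in>Pi\<^sub>E (- A) Zs. h (Defs.merge A a b))"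
proof -
  have "(\<Sum>a\<in>Pi\<^sub>E A Zs. \<Sum>b\<in>Pi\<^sub>E (- A) Zs. h (Defs.merge A a b))
       = (\<Sum>p\<in>Pi\<^sub>E A Zs \<times> Pi\<^sub>E (- A) Zs. h (Defs.merge A (fst p) (snd p)))"
    by (simp add: sum.cartesian_product case_prod_beta)
  also have "\<dots> = (\<Sum>y\<in>Pi\<^sub>E UNIV Zs. h y)"
  proof (rule sum.reindex_bij_betw)
    show "bij_betw (\<lambda>p. Defs.merge A (fst p) (snd p)) (Pi\<^sub>E A Zs \<times> Pi\<^sub>E (- A) Zs) (Pi\<^sub>E UNIV Zs)"
    proof (rule bij_betw_byWitness[where f'="\<lambda>y. (restrict y A, restrict y (- A))"])
      show "\<forall>p\<in>Pi\<^sub>E A Zs \<times> Pi\<^sub>E (- A) Zs. (restrict (Defs.merge A (fst p) (snd p)) A, restrict (Defs.merge A (fst p) (snd p)) (- A)) = p"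
      proof
        fix p assume "p \<in> Pi\<^sub>E A Zs \<times> Pi\<^sub>E (- A) Zs"
        then show "(restrict (Defs.merge A (fst p) (snd p)) A, restrict (Defs.merge A (fst p) (snd p)) (- A)) = p"
          using restrict_merge1[of "fst p" A Zs "snd p"] restrict_merge2[of "snd p" A Zs "fst p"]
          by (simp add: mem_Times_iff)
      qed
      show "\<forall>y\<in>Pi\<^sub>E UNIV Zs. Defs.merge A (fst (restrict y A, restrict y (- A))) (snd (restrict y A, restrict y (- A))) = y"
        by (simp add: merge_restrict)
      show "(\<lambda>p. Defs.merge A (fst p) (snd p)) ` (Pi\<^sub>E A Zs \<times> Pi\<^sub>E (- A) Zs) \<subseteq> Pi\<^sub>E UNIV Zs"
      proof (rule image_subsetI)
        fix p assume "p \<in> Pi\<^sub>E A Zs \<times> Pi\<^sub>E (- A) Zs"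
        then show "Defs.merge A (fst p) (snd p) \<in> Pi\<^sub>E UNIV Zs"
          using merge_in[of "fst p" A Zs "snd p"] by (simp add: mem_Times_iff)
      qed
      show "(\<lambda>y. (restrict y A, restrict y (- A))) ` Pi\<^sub>E UNIV Zs \<subseteq> Pi\<^sub>E A Zs \<times> Pi\<^sub>E (- A) Zs"
      proof (rule image_subsetI)
        fix y assume "y \<in> Pi\<^sub>E UNIV Zs"
        then show "(restrict y A, restrict y (- A)) \<in> Pi\<^sub>E A Zs \<times> Pi\<^sub>E (- A) Zs"
          by (simp add: PiE_iff)
      qed
    qed
  qed
  finally show ?thesis by simp
qed

lemma sum_factor:
  fixes A :: "'a::finite set"
  assumes fin: "\<forall>j. finite (Zs j)"
    and one: "\<forall>j\<in>- A. (\<Sum>s\<in>Zs j. p j s) = (1::real)"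
    and F: "\<forall>a\<in>Pi\<^sub>E A Zs. \<forall>b\<in>Pi\<^sub>E (- A) Zs. f (Defs.merge A a b) = F a"
  shows "(\<Sum>y\<in>Pi\<^sub>E UNIV Zs. (\<Prod>j\<in>UNIV. p j (y j)) * f y)
       = (\<Sum>a\<in>Pi\<^sub>E A Zs. (\<Prod>j\<in>A. p j (a j)) * F a)"
proof -
  have "(\<Sum>y\<in>Pi\<^sub>E UNIV Zs. (\<Prod>j\<in>UNIV. p j (y j)) * f y)
     = (\<Sum>a\<in>Pi\<^sub>E A Zs. \<Sum>b\<in>Pi\<^sub>E (- A) Zs. (\<Prod>j\<in>UNIV. p j (Defs.merge A a b j)) * f (Defs.merge A a b))"
    by (rule sum_merge[OF fin])
  also have "\<dots> = (\<Sum>a\<in>Pi\<^sub>E A Zs. (\<Prod>j\<in>A. p j (a j)) * F a * (\<Sum>b\<in>Pi\<^sub>E (- A) Zs. \<Prod>j\<in>- A. p j (b j)))"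
  proof (rule sum.cong[OF refl])
    fix a assume a: "a \<in> Pi\<^sub>E A Zs"
    have "(\<Sum>b\<in>Pi\<^sub>E (- A) Zs. (\<Prod>j\<in>UNIV. p j (Defs.merge A a b j)) * f (Defs.merge A a b))
        = (\<Sum>b\<in>Pi\<^sub>E (- A) Zs. (\<Prod>j\<in>A. p j (a j)) * F a * (\<Prod>j\<in>- A. p j (b j)))"
    proof (rule sum.cong[OF refl])
      fix b assume b: "b \<in> Pi\<^sub>E (- A) Zs"
      have "(\<Prod>j\<in>UNIV. p j (Defs.merge A a b j)) = (\<Prod>j\<in>A. p j (Defs.merge A a b j)) * (\<Prod>j\<in>- A. p j (Defs.merge A a b j))"
        using prod.union_disjoint[of A "- A" "\<lambda>j. p j (Defs.merge A a b j)"] by (simp add: Compl_partition)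
      also have "\<dots> = (\<Prod>j\<in>A. p j (a j)) * (\<Prod>j\<in>- A. p j (b j))"
        unfolding Defs.merge_def by simp
      finally show "(\<Prod>j\<in>UNIV. p j (Defs.merge A a b j)) * f (Defs.merge A a b) = (\<Prod>j\<in>A. p j (a j)) * F a * (\<Prod>j\<in>- A. p j (b j))"
        using F a b by simp
    qed
    then show "(\<Sum>b\<in>Pi\<^sub>E (- A) Zs. (\<Prod>j\<in>UNIV. p j (Defs.merge A a b j)) * f (Defs.merge A a b))
        = (\<Prod>j\<in>A. p j (a j)) * F a * (\<Sum>b\<in>Pi\<^sub>E (- A) Zs. \<Prod>j\<in>- A. p j (b j))"
      by (simp add: sum_distrib_left)
  qed
  also have "(\<Sum>b\<in>Pi\<^sub>E (- A) Zs. \<Prod>j\<in>- A. p j (b j)) = (\<Prod>j\<in>- A. \<Sum>s\<in>Zs j. p j s)"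
    by (rule prod_sum_PiE[symmetric]) (use fin in auto)
  also have "\<dots> = 1" using one by simp
  finally show ?thesis by simp
qed


definition kop :: "'b set \<Rightarrow> ('b \<Rightarrow> 'b \<Rightarrow> real) \<Rightarrow> ('b \<Rightarrow> real) \<Rightarrow> 'b \<Rightarrow> real" where
  "kop S K f u = (\<Sum>y\<in>S. K u y * f y)"

lemma kpow_kop: "x \<in> S \<Longrightarrow> finite S \<Longrightarrow> (\<Sum>y\<in>S. kpow S K t x y * f y) = (kop S K ^^ t) f x"
proof (induction t arbitrary: f)
  case 0
  have "(\<Sum>y\<in>S. kpow S K 0 x y * f y) = (\<Sum>y\<in>S. if x = y then f y else 0)"
    by (rule sum.cong) auto
  then show ?case using 0 by simp
next
  case (Suc t)
  have "(\<Sum>y\<in>S. kpow S K (Suc t) x y * f y) = (\<Sum>y\<in>S. \<Sum>u\<in>S. kpow S K t x u * (K u y * f y))"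
    by (simp add: sum_distrib_right mult.assoc)
  also have "\<dots> = (\<Sum>u\<in>S. kpow S K t x u * kop S K f u)"
    by (subst sum.swap) (simp add: kop_def sum_distrib_left)
  also have "\<dots> = (kop S K ^^ t) (kop S K f) x" using Suc by simp
  also have "\<dots> = (kop S K ^^ Suc t) f x" by (simp add: funpow_Suc_right del: funpow.simps)
  finally show ?case .
qed

lemma kop_range:
  assumes "\<forall>u\<in>S. \<forall>y\<in>S. K u y \<ge> 0" "\<forall>u\<in>S. (\<Sum>y\<in>S. K u y) = 1" "\<forall>y\<in>S. 0 \<le> f y \<and> f y \<le> 1"
  shows "\<forall>u\<in>S. 0 \<le> kop S K f u \<and> kop S K f u \<le> 1"
proof
  fix u assume u: "u \<in> S"
  have "0 \<le> kop S K f u" unfolding kop_def using assms u by (intro sum_nonneg) auto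
  moreover have "kop S K f u \<le> (\<Sum>y\<in>S. K u y)" unfolding kop_def
    using assms u by (intro sum_mono) (simp add: mult_left_le)
  ultimately show "0 \<le> kop S K f u \<and> kop S K f u \<le> 1" using assms u by simp
qed

lemma kop_pow_range:
  assumes "\<forall>u\<in>S. \<forall>y\<in>S. K u y \<ge> 0" "\<forall>u\<in>S. (\<Sum>y\<in>S. K u y) = 1" "\<forall>y\<in>S. 0 \<le> f y \<and> f y \<le> 1"
  shows "\<forall>u\<in>S. 0 \<le> (kop S K ^^ t) f u \<and> (kop S K ^^ t) f u \<le> 1"
proof (induction t)
  case 0 then show ?case using assms by simp
next
  case (Suc t) then show ?case using kop_range[OF assms(1,2)] by simp
qed

lemma nbhd_mono: "k \<le> k' \<Longrightarrow> nbhd E k i \<subseteq> nbhd E k' i"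
  unfolding nbhd_def using le_trans by blast

lemma nbhd_step:
  assumes "j \<in> nbhd E k i" "l \<in> nbhd E 1 j"
  shows "l \<in> nbhd E (Suc k) i"
proof -
  from assms obtain m m' where m: "m \<le> k" "(i, j) \<in> {(x, y). E x y} ^^ m"
    and m': "m' \<le> 1" "(j, l) \<in> {(x, y). E x y} ^^ m'"
    unfolding nbhd_def by blast
  have "(i, l) \<in> {(x, y). E x y} ^^ (m + m')" using m m' by (auto simp: relpow_add)
  then show ?thesis unfolding nbhd_def using m m' by (intro CollectI exI[of _ "m + m'"]) auto
qed

definition dep :: "('a \<Rightarrow> 's) set \<Rightarrow> 'a set \<Rightarrow> (('a \<Rightarrow> 's) \<Rightarrow> real) \<Rightarrow> bool" where
  "dep S A f = (\<forall>y\<in>S. \<forall>y'\<in>S. (\<forall>j\<in>A. y j = y' j) \<longrightarrow> f y = f y')"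

lemma series_bound:
  fixes a b :: "nat \<Rightarrow> real"
  assumes a: "\<forall>t. 0 \<le> a t \<and> a t \<le> 1" and b: "\<forall>t. 0 \<le> b t \<and> b t \<le> 1"
    and eq: "\<forall>t\<le>m. a t = b t" and g: "0 < \<gamma>" "\<gamma> < 1"
  shows "\<bar>(\<Sum>t. \<gamma> ^ t * a t) - (\<Sum>t. \<gamma> ^ t * b t)\<bar> \<le> \<gamma> ^ (m + 1) / (1 - \<gamma>)"
proof -
  have geo: "summable (\<lambda>t. \<gamma> ^ t)" using g by (intro summable_geometric) simp
  have sa: "summable (\<lambda>t. \<gamma> ^ t * a t)"
    by (rule summable_comparison_test[OF _ geo]) (use a g in \<open>auto intro!: exI[of _ 0] simp: abs_mult mult_left_le\<close>)
  have sb: "summable (\<lambda>t. \<gamma> ^ t * b t)"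
    by (rule summable_comparison_test[OF _ geo]) (use b g in \<open>auto intro!: exI[of _ 0] simp: abs_mult mult_left_le\<close>)
  define d where "d t = \<gamma> ^ t * a t - \<gamma> ^ t * b t" for t
  have sd: "summable d" unfolding d_def using sa sb by (rule summable_diff)
  have "(\<Sum>t. \<gamma> ^ t * a t) - (\<Sum>t. \<gamma> ^ t * b t) = suminf d"
    unfolding d_def using sa sb by (simp add: suminf_diff)
  also have "\<dots> = (\<Sum>n. d (n + (m + 1))) + sum d {..<m + 1}"
    by (rule suminf_split_initial_segment[OF sd])
  also have "sum d {..<m + 1} = 0" unfolding d_def using eq by (intro sum.neutral) auto
  finally have e: "(\<Sum>t. \<gamma> ^ t * a t) - (\<Sum>t. \<gamma> ^ t * b t) = (\<Sum>n. d (n + (m + 1)))" by simp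
  have bd: "\<bar>d t\<bar> \<le> \<gamma> ^ t" for t
  proof -
    have "\<bar>a t - b t\<bar> \<le> 1" using a[rule_format, of t] b[rule_format, of t] by (auto simp: abs_le_iff)
    then have "\<gamma> ^ t * \<bar>a t - b t\<bar> \<le> \<gamma> ^ t" using g by (simp add: mult_left_le)
    then show ?thesis unfolding d_def using g by (simp add: abs_mult right_diff_distrib[symmetric])
  qed
  have geo2: "summable (\<lambda>n. \<gamma> ^ (n + (m + 1)))"
    by (rule summable_ignore_initial_segment[OF geo])
  have sd2: "summable (\<lambda>n. \<bar>d (n + (m + 1))\<bar>)"
    by (rule summable_comparison_test[OF _ geo2]) (intro exI[of _ 0] allI impI, simp only: real_norm_def abs_abs bd)
  have "\<bar>\<Sum>n. d (n + (m + 1))\<bar> \<le> (\<Sum>n. \<bar>d (n + (m + 1))\<bar>)" by (rule summable_rabs[OF sd2])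
  also have "\<dots> \<le> (\<Sum>n. \<gamma> ^ (n + (m + 1)))" by (rule suminf_le[OF _ sd2 geo2]) (rule bd)
  also have "(\<Sum>n. \<gamma> ^ (n + (m + 1))) = (\<Sum>n. \<gamma> ^ (m + 1) * \<gamma> ^ n)"
    by (simp add: power_add mult_ac)
  also have "\<dots> = \<gamma> ^ (m + 1) * (\<Sum>n. \<gamma> ^ n)" by (rule suminf_mult[OF geo])
  also have "\<dots> = \<gamma> ^ (m + 1) / (1 - \<gamma>)" using g by (simp add: suminf_geometric)
  finally show ?thesis using e by simp
qed



lemma PiE_ne: "\<forall>j. finite (Zs j) \<and> Zs j \<noteq> {} \<Longrightarrow> Pi\<^sub>E A Zs \<noteq> {}"
  by (simp add: PiE_eq_empty_iff)

lemma restrict_nb_in: "z \<in> Pi\<^sub>E UNIV Zs \<Longrightarrow> restrict z B \<in> Pi\<^sub>E B Zs"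
  by auto

lemma K_nonneg:
  assumes Pl_nonneg: "\<forall>j. \<forall>x\<in>Pi\<^sub>E (nbhd E 1 j) Zs. \<forall>s\<in>Zs j. Pl j x s \<ge> 0"
  shows "\<forall>u\<in>Pi\<^sub>E UNIV Zs. \<forall>y\<in>Pi\<^sub>E UNIV Zs. joint_kernel E Pl u y \<ge> 0"
  unfolding joint_kernel_def
proof (intro ballI prod_nonneg)
  fix u y j assume u: "u \<in> Pi\<^sub>E UNIV Zs" and y: "y \<in> Pi\<^sub>E UNIV Zs"
  show "0 \<le> Pl j (restrict u (nbhd E 1 j)) (y j)"
    using Pl_nonneg restrict_nb_in[OF u, of "nbhd E 1 j"] y by blast
qed

lemma K_sum:
  fixes E :: "'a::finite \<Rightarrow> 'a \<Rightarrow> bool"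
  assumes Zs_fin: "\<forall>j. finite (Zs j) \<and> Zs j \<noteq> {}"
    and Pl_sum: "\<forall>j. \<forall>x\<in>Pi\<^sub>E (nbhd E 1 j) Zs. (\<Sum>s\<in>Zs j. Pl j x s) = 1"
  shows "\<forall>u\<in>Pi\<^sub>E UNIV Zs. (\<Sum>y\<in>Pi\<^sub>E UNIV Zs. joint_kernel E Pl u y) = 1"
proof
  fix u :: "'a \<Rightarrow> 'b" assume u: "u \<in> Pi\<^sub>E UNIV Zs"
  have "(\<Sum>y\<in>Pi\<^sub>E UNIV Zs. joint_kernel E Pl u y) = (\<Prod>j\<in>UNIV. \<Sum>s\<in>Zs j. Pl j (restrict u (nbhd E 1 j)) s)"
    unfolding joint_kernel_def by (rule prod_sum_PiE[symmetric]) (use Zs_fin in auto)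
  also have "\<dots> = 1" using Pl_sum restrict_nb_in[OF u] by (intro prod.neutral) blast
  finally show "(\<Sum>y\<in>Pi\<^sub>E UNIV Zs. joint_kernel E Pl u y) = 1" .
qed

lemma kop_K_factor:
  fixes E :: "'a::finite \<Rightarrow> 'a \<Rightarrow> bool"
  assumes Zs_fin: "\<forall>j. finite (Zs j) \<and> Zs j \<noteq> {}"
    and Pl_sum: "\<forall>j. \<forall>x\<in>Pi\<^sub>E (nbhd E 1 j) Zs. (\<Sum>s\<in>Zs j. Pl j x s) = 1"
    and d: "dep (Pi\<^sub>E UNIV Zs) A f" and b0: "b0 \<in> Pi\<^sub>E (- A) Zs" and z: "z \<in> Pi\<^sub>E UNIV Zs"
  shows "kop (Pi\<^sub>E UNIV Zs) (joint_kernel E Pl) f z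
     = (\<Sum>a\<in>Pi\<^sub>E A Zs. (\<Prod>j\<in>A. Pl j (restrict z (nbhd E 1 j)) (a j)) * f (Defs.merge A a b0))"
  unfolding kop_def joint_kernel_def
proof (rule sum_factor)
  show "\<forall>j. finite (Zs j)" using Zs_fin by auto
  show "\<forall>j\<in>- A. (\<Sum>s\<in>Zs j. Pl j (restrict z (nbhd E 1 j)) s) = 1" using Pl_sum restrict_nb_in[OF z] by blast
  show "\<forall>a\<in>Pi\<^sub>E A Zs. \<forall>b\<in>Pi\<^sub>E (- A) Zs. f (Defs.merge A a b) = f (Defs.merge A a b0)"
  proof (intro ballI)
    fix a b assume a: "a \<in> Pi\<^sub>E A Zs" and b: "b \<in> Pi\<^sub>E (- A) Zs"
    show "f (Defs.merge A a b) = f (Defs.merge A a b0)"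
    proof -
      have ag: "\<forall>j\<in>A. Defs.merge A a b j = Defs.merge A a b0 j" by (simp add: Defs.merge_def)
      show ?thesis using d merge_in[OF a b] merge_in[OF a b0] ag unfolding dep_def by blast
    qed
  qed
qed

lemma kop_local:
  fixes E :: "'a::finite \<Rightarrow> 'a \<Rightarrow> bool"
  assumes Zs_fin: "\<forall>j. finite (Zs j) \<and> Zs j \<noteq> {}"
    and Pl_sum: "\<forall>j. \<forall>x\<in>Pi\<^sub>E (nbhd E 1 j) Zs. (\<Sum>s\<in>Zs j. Pl j x s) = 1"
    and d: "dep (Pi\<^sub>E UNIV Zs) (nbhd E k i0) f"
  shows "dep (Pi\<^sub>E UNIV Zs) (nbhd E (Suc k) i0) (kop (Pi\<^sub>E UNIV Zs) (joint_kernel E Pl) f)"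
  unfolding dep_def
proof (intro ballI impI)
  fix z z' assume z: "z \<in> Pi\<^sub>E UNIV Zs" and z': "z' \<in> Pi\<^sub>E UNIV Zs"
    and ag: "\<forall>j\<in>nbhd E (Suc k) i0. z j = z' j"
  obtain b0 where b0: "b0 \<in> Pi\<^sub>E (- nbhd E k i0) Zs" using PiE_ne[OF Zs_fin] by blast
  have eq: "restrict z (nbhd E 1 j) = restrict z' (nbhd E 1 j)" if "j \<in> nbhd E k i0" for j
    using ag nbhd_step[OF that] by (auto simp: restrict_def)
  show "kop (Pi\<^sub>E UNIV Zs) (joint_kernel E Pl) f z = kop (Pi\<^sub>E UNIV Zs) (joint_kernel E Pl) f z'"
    unfolding kop_K_factor[OF Zs_fin Pl_sum d b0 z] kop_K_factor[OF Zs_fin Pl_sum d b0 z']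
  proof (rule sum.cong[OF refl])
    fix a assume "a \<in> Pi\<^sub>E (nbhd E k i0) Zs"
    have "(\<Prod>j\<in>nbhd E k i0. Pl j (restrict z (nbhd E 1 j)) (a j)) = (\<Prod>j\<in>nbhd E k i0. Pl j (restrict z' (nbhd E 1 j)) (a j))"
      by (rule prod.cong[OF refl]) (use eq[unfolded One_nat_def] in simp)
    then show "(\<Prod>j\<in>nbhd E k i0. Pl j (restrict z (nbhd E 1 j)) (a j)) * f (Defs.merge (nbhd E k i0) a b0) =
         (\<Prod>j\<in>nbhd E k i0. Pl j (restrict z' (nbhd E 1 j)) (a j)) * f (Defs.merge (nbhd E k i0) a b0)" by simp
  qed
qed

lemma kopQ_eq:
  fixes N :: "'a::finite set"
  assumes Zs_fin: "\<forall>j. finite (Zs j) \<and> Zs j \<noteq> {}"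
    and fg: "\<forall>x'\<in>Pi\<^sub>E N Zs. \<forall>w'\<in>Pi\<^sub>E (- N) Zs. f (Defs.merge N x' w') = g x'"
  shows "kop (Pi\<^sub>E N Zs) (sub_kernel N Zs p K) g x
    = (\<Sum>w\<in>Pi\<^sub>E (- N) Zs. p (Defs.merge N x w) / marg N Zs p x * kop (Pi\<^sub>E UNIV Zs) K f (Defs.merge N x w))"
proof -
  have fin: "\<forall>j. finite (Zs j)" using Zs_fin by auto
  define c where "c w = p (Defs.merge N x w) / marg N Zs p x" for w
  define M where "M w x' w' = K (Defs.merge N x w) (Defs.merge N x' w')" for w x' w'
  have "kop (Pi\<^sub>E N Zs) (sub_kernel N Zs p K) g x
     = (\<Sum>x'\<in>Pi\<^sub>E N Zs. (\<Sum>w\<in>Pi\<^sub>E (- N) Zs. c w * (\<Sum>w'\<in>Pi\<^sub>E (- N) Zs. M w x' w')) * g x')"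
    unfolding kop_def sub_kernel_def kernN_def c_def M_def by (rule refl)
  also have "\<dots> = (\<Sum>x'\<in>Pi\<^sub>E N Zs. \<Sum>w\<in>Pi\<^sub>E (- N) Zs. c w * (\<Sum>w'\<in>Pi\<^sub>E (- N) Zs. M w x' w' * f (Defs.merge N x' w')))"
  proof (rule sum.cong[OF refl])
    fix x' assume x': "x' \<in> Pi\<^sub>E N Zs"
    have "(\<Sum>w\<in>Pi\<^sub>E (- N) Zs. c w * (\<Sum>w'\<in>Pi\<^sub>E (- N) Zs. M w x' w')) * g x'
       = (\<Sum>w\<in>Pi\<^sub>E (- N) Zs. c w * ((\<Sum>w'\<in>Pi\<^sub>E (- N) Zs. M w x' w') * g x'))"
      by (simp only: sum_distrib_right mult.assoc)
    also have "\<dots> = (\<Sum>w\<in>Pi\<^sub>E (- N) Zs. c w * (\<Sum>w'\<in>Pi\<^sub>E (- N) Zs. M w x' w' * f (Defs.merge N x' w')))"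
    proof (rule sum.cong[OF refl])
      fix w
      have "(\<Sum>w'\<in>Pi\<^sub>E (- N) Zs. M w x' w') * g x' = (\<Sum>w'\<in>Pi\<^sub>E (- N) Zs. M w x' w' * g x')"
        by (rule sum_distrib_right)
      also have "\<dots> = (\<Sum>w'\<in>Pi\<^sub>E (- N) Zs. M w x' w' * f (Defs.merge N x' w'))"
        using fg x' by (intro sum.cong refl) simp
      finally show "c w * ((\<Sum>w'\<in>Pi\<^sub>E (- N) Zs. M w x' w') * g x') = c w * (\<Sum>w'\<in>Pi\<^sub>E (- N) Zs. M w x' w' * f (Defs.merge N x' w'))"
        by simp
    qed
    finally show "(\<Sum>w\<in>Pi\<^sub>E (- N) Zs. c w * (\<Sum>w'\<in>Pi\<^sub>E (- N) Zs. M w x' w')) * g x'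
       = (\<Sum>w\<in>Pi\<^sub>E (- N) Zs. c w * (\<Sum>w'\<in>Pi\<^sub>E (- N) Zs. M w x' w' * f (Defs.merge N x' w')))" .
  qed
  also have "\<dots> = (\<Sum>w\<in>Pi\<^sub>E (- N) Zs. \<Sum>x'\<in>Pi\<^sub>E N Zs. c w * (\<Sum>w'\<in>Pi\<^sub>E (- N) Zs. M w x' w' * f (Defs.merge N x' w')))"
    by (rule sum.swap)
  also have "\<dots> = (\<Sum>w\<in>Pi\<^sub>E (- N) Zs. c w * (\<Sum>x'\<in>Pi\<^sub>E N Zs. \<Sum>w'\<in>Pi\<^sub>E (- N) Zs. M w x' w' * f (Defs.merge N x' w')))"
    by (simp only: sum_distrib_left)
  also have "\<dots> = (\<Sum>w\<in>Pi\<^sub>E (- N) Zs. c w * kop (Pi\<^sub>E UNIV Zs) K f (Defs.merge N x w))"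
    unfolding kop_def M_def by (simp only: sum_merge[OF fin, of _ N])
  finally show ?thesis unfolding c_def .
qed

lemma c_sum:
  fixes N :: "'a::finite set"
  assumes Zs_fin: "\<forall>j. finite (Zs j) \<and> Zs j \<noteq> {}"
    and full: "\<forall>z\<in>Pi\<^sub>E UNIV Zs. p z > 0" and x: "x \<in> Pi\<^sub>E N Zs"
  shows "marg N Zs p x > 0" "(\<Sum>w\<in>Pi\<^sub>E (- N) Zs. p (Defs.merge N x w) / marg N Zs p x) = 1"
proof -
  have fin: "finite (Pi\<^sub>E (- N) Zs)" using Zs_fin by (intro finite_PiE) auto
  have ne: "Pi\<^sub>E (- N) Zs \<noteq> {}" by (rule PiE_ne[OF Zs_fin])
  have ps: "\<And>w. w \<in> Pi\<^sub>E (- N) Zs \<Longrightarrow> 0 < p (Defs.merge N x w)"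
    using full merge_in[OF x] by blast
  show pos: "marg N Zs p x > 0" unfolding marg_def by (rule sum_pos[OF fin ne ps])
  show "(\<Sum>w\<in>Pi\<^sub>E (- N) Zs. p (Defs.merge N x w) / marg N Zs p x) = 1"
    using pos by (simp add: sum_divide_distrib[symmetric] marg_def)
qed



lemma step_lemma:
  fixes E :: "'a::finite \<Rightarrow> 'a \<Rightarrow> bool"
  assumes Zs_fin: "\<forall>j. finite (Zs j) \<and> Zs j \<noteq> {}"
    and Pl_sum: "\<forall>j. \<forall>x\<in>Pi\<^sub>E (nbhd E 1 j) Zs. (\<Sum>s\<in>Zs j. Pl j x s) = 1"
    and full: "\<forall>z\<in>Pi\<^sub>E UNIV Zs. p z > 0"
    and sub: "nbhd E (Suc k) i0 \<subseteq> N"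
    and d: "dep (Pi\<^sub>E UNIV Zs) (nbhd E k i0) f"
    and fg: "\<forall>y\<in>Pi\<^sub>E UNIV Zs. f y = g (restrict y N)"
  shows "dep (Pi\<^sub>E UNIV Zs) (nbhd E (Suc k) i0) (kop (Pi\<^sub>E UNIV Zs) (joint_kernel E Pl) f)
    \<and> (\<forall>y\<in>Pi\<^sub>E UNIV Zs. kop (Pi\<^sub>E UNIV Zs) (joint_kernel E Pl) f y
          = kop (Pi\<^sub>E N Zs) (sub_kernel N Zs p (joint_kernel E Pl)) g (restrict y N))"
proof
  let ?S = "Pi\<^sub>E UNIV Zs" and ?K = "joint_kernel E Pl"
  have d1: "dep ?S (nbhd E (Suc k) i0) (kop ?S ?K f)" by (rule kop_local[OF Zs_fin Pl_sum d])
  then show "dep ?S (nbhd E (Suc k) i0) (kop ?S ?K f)" .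
  show "\<forall>y\<in>?S. kop ?S ?K f y = kop (Pi\<^sub>E N Zs) (sub_kernel N Zs p ?K) g (restrict y N)"
  proof
    fix y assume y: "y \<in> ?S"
    define x where "x = restrict y N"
    have x: "x \<in> Pi\<^sub>E N Zs" unfolding x_def by (rule restrict_nb_in[OF y])
    have fg': "\<forall>x'\<in>Pi\<^sub>E N Zs. \<forall>w'\<in>Pi\<^sub>E (- N) Zs. f (Defs.merge N x' w') = g x'"
    proof (intro ballI)
      fix x' w' assume x': "x' \<in> Pi\<^sub>E N Zs" and w': "w' \<in> Pi\<^sub>E (- N) Zs"
      have "f (Defs.merge N x' w') = g (restrict (Defs.merge N x' w') N)"
        using fg merge_in[OF x' w'] by blast
      then show "f (Defs.merge N x' w') = g x'" using restrict_merge1[OF x'] by simp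
    qed
    have "kop (Pi\<^sub>E N Zs) (sub_kernel N Zs p ?K) g x
      = (\<Sum>w\<in>Pi\<^sub>E (- N) Zs. p (Defs.merge N x w) / marg N Zs p x * kop ?S ?K f (Defs.merge N x w))"
      by (rule kopQ_eq[OF Zs_fin fg'])
    also have "\<dots> = (\<Sum>w\<in>Pi\<^sub>E (- N) Zs. p (Defs.merge N x w) / marg N Zs p x * kop ?S ?K f y)"
    proof (rule sum.cong[OF refl])
      fix w assume w: "w \<in> Pi\<^sub>E (- N) Zs"
      have ag: "\<forall>j\<in>nbhd E (Suc k) i0. Defs.merge N x w j = y j"
        using sub unfolding x_def Defs.merge_def by auto
      have "kop ?S ?K f (Defs.merge N x w) = kop ?S ?K f y"
        using d1 merge_in[OF x w] y ag unfolding dep_def by blast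
      then show "p (Defs.merge N x w) / marg N Zs p x * kop ?S ?K f (Defs.merge N x w)
          = p (Defs.merge N x w) / marg N Zs p x * kop ?S ?K f y" by simp
    qed
    also have "\<dots> = kop ?S ?K f y * (\<Sum>w\<in>Pi\<^sub>E (- N) Zs. p (Defs.merge N x w) / marg N Zs p x)"
      by (simp add: sum_distrib_left mult.commute)
    also have "\<dots> = kop ?S ?K f y" using c_sum(2)[OF Zs_fin full x] by simp
    finally show "kop ?S ?K f y = kop (Pi\<^sub>E N Zs) (sub_kernel N Zs p ?K) g (restrict y N)"
      unfolding x_def by simp
  qed
qed

lemma Q_props:
  fixes E :: "'a::finite \<Rightarrow> 'a \<Rightarrow> bool"
  assumes Zs_fin: "\<forall>j. finite (Zs j) \<and> Zs j \<noteq> {}"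
    and Pl_nonneg: "\<forall>j. \<forall>x\<in>Pi\<^sub>E (nbhd E 1 j) Zs. \<forall>s\<in>Zs j. Pl j x s \<ge> 0"
    and Pl_sum: "\<forall>j. \<forall>x\<in>Pi\<^sub>E (nbhd E 1 j) Zs. (\<Sum>s\<in>Zs j. Pl j x s) = 1"
    and full: "\<forall>z\<in>Pi\<^sub>E UNIV Zs. p z > 0"
  shows "\<forall>u\<in>Pi\<^sub>E N Zs. \<forall>y\<in>Pi\<^sub>E N Zs. sub_kernel N Zs p (joint_kernel E Pl) u y \<ge> 0"
    and "\<forall>u\<in>Pi\<^sub>E N Zs. (\<Sum>y\<in>Pi\<^sub>E N Zs. sub_kernel N Zs p (joint_kernel E Pl) u y) = 1"
proof -
  let ?S = "Pi\<^sub>E UNIV Zs" and ?K = "joint_kernel E Pl"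
  have Kn: "\<forall>u\<in>?S. \<forall>y\<in>?S. ?K u y \<ge> 0" by (rule K_nonneg[OF Pl_nonneg])
  have Ks: "\<forall>u\<in>?S. (\<Sum>y\<in>?S. ?K u y) = 1" by (rule K_sum[OF Zs_fin Pl_sum])
  show "\<forall>u\<in>Pi\<^sub>E N Zs. \<forall>y\<in>Pi\<^sub>E N Zs. sub_kernel N Zs p ?K u y \<ge> 0"
  proof (intro ballI)
    fix u y assume u: "u \<in> Pi\<^sub>E N Zs" and y: "y \<in> Pi\<^sub>E N Zs"
    have mpos: "marg N Zs p u > 0" by (rule c_sum(1)[OF Zs_fin full u])
    show "sub_kernel N Zs p ?K u y \<ge> 0" unfolding sub_kernel_def
    proof (rule sum_nonneg)
      fix w assume w: "w \<in> Pi\<^sub>E (- N) Zs"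
      have "p (Defs.merge N u w) \<ge> 0" using full merge_in[OF u w] by (meson less_imp_le)
      moreover have "kernN N Zs ?K (Defs.merge N u w) y \<ge> 0" unfolding kernN_def
        using Kn merge_in[OF u w] merge_in[OF y] by (intro sum_nonneg) blast
      ultimately show "0 \<le> p (Defs.merge N u w) / marg N Zs p u * kernN N Zs ?K (Defs.merge N u w) y"
        using mpos by simp
    qed
  qed
  show "\<forall>u\<in>Pi\<^sub>E N Zs. (\<Sum>y\<in>Pi\<^sub>E N Zs. sub_kernel N Zs p ?K u y) = 1"
  proof
    fix u assume u: "u \<in> Pi\<^sub>E N Zs"
    have one: "\<forall>x'\<in>Pi\<^sub>E N Zs. \<forall>w'\<in>Pi\<^sub>E (- N) Zs. (\<lambda>_. 1::real) (Defs.merge N x' w') = (\<lambda>_. 1) x'"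
      by simp
    have "(\<Sum>y\<in>Pi\<^sub>E N Zs. sub_kernel N Zs p ?K u y) = kop (Pi\<^sub>E N Zs) (sub_kernel N Zs p ?K) (\<lambda>_. 1) u"
      unfolding kop_def by simp
    also have "\<dots> = (\<Sum>w\<in>Pi\<^sub>E (- N) Zs. p (Defs.merge N u w) / marg N Zs p u * kop ?S ?K (\<lambda>_. 1) (Defs.merge N u w))"
      by (rule kopQ_eq[OF Zs_fin one])
    also have "\<dots> = (\<Sum>w\<in>Pi\<^sub>E (- N) Zs. p (Defs.merge N u w) / marg N Zs p u)"
    proof (rule sum.cong[OF refl])
      fix w assume w: "w \<in> Pi\<^sub>E (- N) Zs"
      have "kop ?S ?K (\<lambda>_. 1) (Defs.merge N u w) = 1"
        unfolding kop_def using Ks merge_in[OF u w] by simp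
      then show "p (Defs.merge N u w) / marg N Zs p u * kop ?S ?K (\<lambda>_. 1) (Defs.merge N u w)
         = p (Defs.merge N u w) / marg N Zs p u" by simp
    qed
    also have "\<dots> = 1" by (rule c_sum(2)[OF Zs_fin full u])
    finally show "(\<Sum>y\<in>Pi\<^sub>E N Zs. sub_kernel N Zs p ?K u y) = 1" .
  qed
qed



theorem mainTheorem20:
  fixes E :: "'a::finite \<Rightarrow> 'a \<Rightarrow> bool"
    and Zs :: "'a \<Rightarrow> 's set"
    and Pl :: "'a \<Rightarrow> ('a \<Rightarrow> 's) \<Rightarrow> 's \<Rightarrow> real"
    and \<pi> :: "('a \<Rightarrow> 's) \<Rightarrow> real"
    and i0 :: 'a and \<kappa>c \<kappa>r :: nat
    and r :: "('a \<Rightarrow> 's) \<Rightarrow> real" and \<gamma> :: real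
  assumes sym: "\<forall>i j. E i j \<longrightarrow> E j i"
    and Zs_fin: "\<forall>j. finite (Zs j) \<and> Zs j \<noteq> {}"
    and Pl_nonneg: "\<forall>j. \<forall>x\<in>Pi\<^sub>E (nbhd E 1 j) Zs. \<forall>s\<in>Zs j. Pl j x s \<ge> 0"
    and Pl_sum: "\<forall>j. \<forall>x\<in>Pi\<^sub>E (nbhd E 1 j) Zs. (\<Sum>s\<in>Zs j. Pl j x s) = 1"
    and irr: "irreducible_on (Pi\<^sub>E UNIV Zs) (joint_kernel E Pl)"
    and aper: "aperiodic_on (Pi\<^sub>E UNIV Zs) (joint_kernel E Pl)"
    and stat: "stationary_on (Pi\<^sub>E UNIV Zs) (joint_kernel E Pl) \<pi>"
    and full: "\<forall>z\<in>Pi\<^sub>E UNIV Zs. \<pi> z > 0"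
    and kc: "\<kappa>c \<ge> 1" and kr: "\<kappa>r < \<kappa>c"
    and r_range: "\<forall>x\<in>Pi\<^sub>E (nbhd E \<kappa>r i0) Zs. 0 \<le> r x \<and> r x \<le> 1"
    and g: "0 < \<gamma>" "\<gamma> < 1"
  shows "\<forall>z\<in>Pi\<^sub>E UNIV Zs.
    \<bar>disc_cost (Pi\<^sub>E (nbhd E \<kappa>c i0) Zs)
        (sub_kernel (nbhd E \<kappa>c i0) Zs \<pi> (joint_kernel E Pl))
        (\<lambda>x. r (restrict x (nbhd E \<kappa>r i0))) \<gamma> (restrict z (nbhd E \<kappa>c i0))
     - disc_cost (Pi\<^sub>E UNIV Zs) (joint_kernel E Pl)
        (\<lambda>y. r (restrict y (nbhd E \<kappa>r i0))) \<gamma> z\<bar>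
    \<le> \<gamma> ^ (\<kappa>c - \<kappa>r + 1) / (1 - \<gamma>)"
proof
  fix z assume z: "z \<in> Pi\<^sub>E UNIV Zs"
  define S where "S = Pi\<^sub>E UNIV Zs"
  define N where "N = nbhd E \<kappa>c i0"
  define Nr where "Nr = nbhd E \<kappa>r i0"
  define SN where "SN = Pi\<^sub>E N Zs"
  define K where "K = joint_kernel E Pl"
  define Q where "Q = sub_kernel N Zs \<pi> K"
  define h where "h = (\<lambda>y. r (restrict y Nr))"
  have NrN: "Nr \<subseteq> N" unfolding Nr_def N_def using kr by (intro nbhd_mono) simp
  have finS: "finite S" unfolding S_def using Zs_fin by (intro finite_PiE) auto
  have finSN: "finite SN" unfolding SN_def using Zs_fin by (intro finite_PiE) auto
  have zS: "z \<in> S" using z unfolding S_def .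
  have zN: "restrict z N \<in> SN" unfolding SN_def by (rule restrict_nb_in[OF z])
  have inv: "t \<le> \<kappa>c - \<kappa>r \<Longrightarrow> dep S (nbhd E (\<kappa>r + t) i0) ((kop S K ^^ t) h)
      \<and> (\<forall>y\<in>S. (kop S K ^^ t) h y = (kop SN Q ^^ t) h (restrict y N))" for t
  proof (induction t)
    case 0
    have "dep S Nr h" unfolding dep_def h_def
    proof (intro ballI impI)
      fix y y' :: "'a \<Rightarrow> 's" assume "\<forall>j\<in>Nr. y j = y' j"
      then have "restrict y Nr = restrict y' Nr" by (intro ext) (simp add: restrict_def)
      then show "r (restrict y Nr) = r (restrict y' Nr)" by simp
    qed
    moreover have "\<forall>y\<in>S. h y = h (restrict y N)"
    proof
      fix y assume "y \<in> S"
      have "restrict (restrict y N) Nr = restrict y Nr" using NrN by (intro ext) (auto simp: restrict_def)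
      then show "h y = h (restrict y N)" unfolding h_def by simp
    qed
    ultimately show ?case unfolding Nr_def by (simp only: funpow.simps(1) id_apply add_0_right)
  next
    case (Suc t)
    have tle: "t \<le> \<kappa>c - \<kappa>r" using Suc.prems by simp
    note IH = conjunct1[OF Suc.IH[OF tle]] conjunct2[OF Suc.IH[OF tle]]
    have sub: "nbhd E (Suc (\<kappa>r + t)) i0 \<subseteq> N" unfolding N_def using Suc.prems by (intro nbhd_mono) simp
    have "dep S (nbhd E (Suc (\<kappa>r + t)) i0) (kop S K ((kop S K ^^ t) h))
      \<and> (\<forall>y\<in>S. kop S K ((kop S K ^^ t) h) y = kop SN Q ((kop SN Q ^^ t) h) (restrict y N))"
      unfolding S_def K_def SN_def Q_def
      by (rule step_lemma[OF Zs_fin Pl_sum full sub IH[unfolded S_def K_def SN_def Q_def]])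
    then show ?case unfolding funpow.simps(2) o_apply add_Suc_right .
  qed
  have Kn: "\<forall>u\<in>S. \<forall>y\<in>S. K u y \<ge> 0" unfolding S_def K_def by (rule K_nonneg[OF Pl_nonneg])
  have Ks: "\<forall>u\<in>S. (\<Sum>y\<in>S. K u y) = 1" unfolding S_def K_def by (rule K_sum[OF Zs_fin Pl_sum])
  have Qn: "\<forall>u\<in>SN. \<forall>y\<in>SN. Q u y \<ge> 0" unfolding SN_def Q_def K_def
    by (rule Q_props(1)[OF Zs_fin Pl_nonneg Pl_sum full])
  have Qs: "\<forall>u\<in>SN. (\<Sum>y\<in>SN. Q u y) = 1" unfolding SN_def Q_def K_def
    by (rule Q_props(2)[OF Zs_fin Pl_nonneg Pl_sum full])
  have hS: "\<forall>y\<in>S. 0 \<le> h y \<and> h y \<le> 1"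
  proof
    fix y assume "y \<in> S"
    then have "restrict y Nr \<in> Pi\<^sub>E Nr Zs" unfolding S_def by (rule restrict_nb_in)
    then show "0 \<le> h y \<and> h y \<le> 1" unfolding h_def using r_range Nr_def by blast
  qed
  have hSN: "\<forall>y\<in>SN. 0 \<le> h y \<and> h y \<le> 1"
  proof
    fix y assume y: "y \<in> SN"
    have "restrict y Nr \<in> Pi\<^sub>E Nr Zs" using y NrN unfolding SN_def by (auto simp: PiE_iff)
    then show "0 \<le> h y \<and> h y \<le> 1" unfolding h_def using r_range Nr_def by blast
  qed
  define a where "a t = (kop SN Q ^^ t) h (restrict z N)" for t
  define b where "b t = (kop S K ^^ t) h z" for t
  have a: "\<forall>t. 0 \<le> a t \<and> a t \<le> 1" unfolding a_def using kop_pow_range[OF Qn Qs hSN] zN by blast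
  have b: "\<forall>t. 0 \<le> b t \<and> b t \<le> 1" unfolding b_def using kop_pow_range[OF Kn Ks hS] zS by blast
  have eq: "\<forall>t\<le>\<kappa>c - \<kappa>r. a t = b t" unfolding a_def b_def using inv zS by auto
  have da: "disc_cost SN Q h \<gamma> (restrict z N) = (\<Sum>t. \<gamma> ^ t * a t)"
    unfolding disc_cost_def a_def using kpow_kop[OF zN finSN] by simp
  have db: "disc_cost S K h \<gamma> z = (\<Sum>t. \<gamma> ^ t * b t)"
    unfolding disc_cost_def b_def using kpow_kop[OF zS finS] by simp
  have "\<bar>disc_cost SN Q h \<gamma> (restrict z N) - disc_cost S K h \<gamma> z\<bar> \<le> \<gamma> ^ (\<kappa>c - \<kappa>r + 1) / (1 - \<gamma>)"
    unfolding da db by (rule series_bound[OF a b eq g])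
  then show "\<bar>disc_cost (Pi\<^sub>E (nbhd E \<kappa>c i0) Zs)
        (sub_kernel (nbhd E \<kappa>c i0) Zs \<pi> (joint_kernel E Pl))
        (\<lambda>x. r (restrict x (nbhd E \<kappa>r i0))) \<gamma> (restrict z (nbhd E \<kappa>c i0))
     - disc_cost (Pi\<^sub>E UNIV Zs) (joint_kernel E Pl)
        (\<lambda>y. r (restrict y (nbhd E \<kappa>r i0))) \<gamma> z\<bar>
    \<le> \<gamma> ^ (\<kappa>c - \<kappa>r + 1) / (1 - \<gamma>)"
    unfolding SN_def Q_def K_def S_def N_def h_def Nr_def .
qed


end
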